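(* Let $\mathcal{G}$ be a multi-layer graph with $l$ layers, $d,k\in\mathbb{N}$ with $k\ge1$, and $\mathcal{R}$ a collection of exactly $k$ subsets of $V(\mathcal{G})$. Let $L\subseteq\{1,\dots,l\}$. If $C^d_L(\mathcal{G})$ does not satisfy $|\mathsf{Cov}((\mathcal{R}-\{C^*(\mathcal{R})\})\cup\{C^d_L(\mathcal{G})\})|\ge(1+\frac1k)|\mathsf{Cov}(\mathcal{R})|$, then no descendant $C^d_{L'}(\mathcal{G})$ of $C^d_L(\mathcal{G})$ satisfies $|\mathsf{Cov}((\mathcal{R}-\{C^*(\mathcal{R})\})\cup\{C^d_{L'}(\mathcal{G})\})|\ge(1+\frac1k)|\mathsf{Cov}(\mathcal{R})|$.
   Context: A multi-layer graph $\mathcal{G}=(V,E_1,\dots,E_l)$ consists of a finite vertex set $V$ and edge sets $E_i$ of simple undirected graphs $G_i=(V,E_i)$. A graph is $d$-dense if every vertex has degree at least $d$; the $d$-coherent core $C^d_L(\mathcal{G})$ is the unique maximal $S\subseteq V$ such that the induced subgraph $G_i[S]$ is $d$-dense for all $i\in L$ (with $C^d_\emptyset(\mathcal{G})=V$). For a collection $\mathcal{R}$ of sets, $\mathsf{Cov}(\mathcal{R})=\bigcup_{R\in\mathcal{R}}R$; for $C'\in\mathcal{R}$, $\Delta(\mathcal{R},C')=C'-\mathsf{Cov}(\mathcal{R}-\{C'\})$; $C^*(\mathcal{R})$ is a fixed element of $\mathcal{R}$ minimizing $|\Delta(\mathcal{R},C')|$. Bottom-up search tree: $C^d_L(\mathcal{G})$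 is the parent of $C^d_{L'}(\mathcal{G})$ if $L'=L\cup\{\ell\}$ with $\ell>\max(L)$ ($\max(\emptyset)=-\infty$); descendants are obtained by iterating the child relation, i.e., $L'\supsetneq L$ with every element of $L'-L$ larger than $\max(L)$. *)

theory Defs
  imports Complex_Main
begin

definition multilayer_graph :: "'a set \<Rightarrow> nat \<Rightarrow> (nat \<Rightarrow> 'a set set) \<Rightarrow> bool" where
  "multilayer_graph V l E \<longleftrightarrow> finite V \<and>
     (\<forall>i\<in>{1..l}. \<forall>e\<in>E i. e \<subseteq> V \<and> card e = 2)"

definition ind_degree :: "(nat \<Rightarrow> 'a set set) \<Rightarrow> nat \<Rightarrow> 'a set \<Rightarrow> 'a \<Rightarrow> nat" where
  "ind_degree E i S v = card {u \<in> S. {v, u} \<in> E i}"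

definition dense_in :: "(nat \<Rightarrow> 'a set set) \<Rightarrow> nat \<Rightarrow> nat \<Rightarrow> 'a set \<Rightarrow> bool" where
  "dense_in E i d S \<longleftrightarrow> (\<forall>v\<in>S. ind_degree E i S v \<ge> d)"

definition coherent_core :: "'a set \<Rightarrow> (nat \<Rightarrow> 'a set set) \<Rightarrow> nat \<Rightarrow> nat set \<Rightarrow> 'a set" where
  "coherent_core V E d L =
     (THE S. S \<subseteq> V \<and> (\<forall>i\<in>L. dense_in E i d S) \<and>
        (\<forall>T. T \<subseteq> V \<and> (\<forall>i\<in>L. dense_in E i d T) \<longrightarrow> T \<subseteq> S))"

definition Cov :: "'a set set \<Rightarrow> 'a set" where
  "Cov R = \<Union>R"

definition Delta :: "'a set set \<Rightarrow> 'a set \<Rightarrow> 'a set" where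
  "Delta R C' = C' - Cov (R - {C'})"

(* L' is a descendant of L in the bottom-up search tree (max {} = -infinity) *)
definition descendant :: "nat set \<Rightarrow> nat set \<Rightarrow> bool" where
  "descendant L L' \<longleftrightarrow> L \<subset> L' \<and> (\<forall>x\<in>L' - L. \<forall>y\<in>L. y < x)"

end

theory Submission
  imports Defs
begin

lemma core_eq:
  assumes fin: "finite V"
  shows "coherent_core V E d L = \<Union>{T. T \<subseteq> V \<and> (\<forall>i\<in>L. dense_in E i d T)}"
    (is "_ = ?U")
proof -
  have sub: "?U \<subseteq> V" by blast
  have dense: "\<forall>i\<in>L. dense_in E i d ?U"
  proof (intro ballI)
    fix i assume i: "i \<in> L"
    have "\<forall>v\<in>?U. d \<le> ind_degree E i ?U v"
    proof
      fix v assume "v \<in> ?U"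
      then obtain T where T: "T \<subseteq> V" "\<forall>i\<in>L. dense_in E i d T" "v \<in> T" by blast
      have "d \<le> ind_degree E i T v" using T i unfolding dense_in_def by blast
      also have "\<dots> \<le> ind_degree E i ?U v"
        unfolding ind_degree_def
        by (rule card_mono) (use fin sub T in \<open>auto intro: finite_subset\<close>)
      finally show "d \<le> ind_degree E i ?U v" by blast
    qed
    then show "dense_in E i d ?U" by (simp only: dense_in_def)
  qed
  show ?thesis unfolding coherent_core_def
    by (rule the_equality) (use sub dense in blast)+
qed

lemma core_mono:
  assumes "finite V" "L \<subseteq> L'"
  shows "coherent_core V E d L' \<subseteq> coherent_core V E d L"
  using assms by (simp add: core_eq) blast


theorem lemma2:
  fixes V :: "'a set" and l :: nat and E :: "nat \<Rightarrow> 'a set set"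
    and d k :: nat and R :: "'a set set" and Cstar :: "'a set" and L :: "nat set"
  assumes G: "multilayer_graph V l E"
    and k: "k \<ge> 1"
    and R: "finite R" "card R = k" "\<forall>C\<in>R. C \<subseteq> V"
    and Cstar: "Cstar \<in> R" "\<forall>C'\<in>R. card (Delta R Cstar) \<le> card (Delta R C')"
    and L: "L \<subseteq> {1..l}"
    and notL: "\<not> (real (card (Cov ((R - {Cstar}) \<union> {coherent_core V E d L})))
                  \<ge> (1 + 1 / real k) * real (card (Cov R)))"
  shows "\<forall>L'. L' \<subseteq> {1..l} \<and> descendant L L' \<longrightarrow>
           \<not> (real (card (Cov ((R - {Cstar}) \<union> {coherent_core V E d L'})))
                  \<ge> (1 + 1 / real k) * real (card (Cov R)))"
proof (intro allI impI)
  fix L' assume h: "L' \<subseteq> {1..l} \<and> descendant L L'"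
  have fin: "finite V" using G unfolding multilayer_graph_def by blast
  have "coherent_core V E d L' \<subseteq> coherent_core V E d L"
    using core_mono[OF fin] h unfolding descendant_def by blast
  hence s: "Cov ((R - {Cstar}) \<union> {coherent_core V E d L'}) \<subseteq> Cov ((R - {Cstar}) \<union> {coherent_core V E d L})"
    unfolding Cov_def by blast
  have "coherent_core V E d L \<subseteq> V" using core_eq[OF fin] by auto
  hence "Cov ((R - {Cstar}) \<union> {coherent_core V E d L}) \<subseteq> V" using R(3) unfolding Cov_def by blast
  hence "finite (Cov ((R - {Cstar}) \<union> {coherent_core V E d L}))" using fin finite_subset by blast
  hence "card (Cov ((R - {Cstar}) \<union> {coherent_core V E d L'})) \<le> card (Cov ((R - {Cstar}) \<union> {coherent_core V E d L}))"
    using s card_mono by blast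
  thus "\<not> (real (card (Cov ((R - {Cstar}) \<union> {coherent_core V E d L'})))
                  \<ge> (1 + 1 / real k) * real (card (Cov R)))" using notL by linarith
qed

end
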